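(* Let $i\in\{3\frac{1}{2},4,5\}$ and let $X$ be a locally connected locally compact $T_i$-space. Then the partially ordered set $(\mathscr{Y}_i(X),\leq)$ of all $T_i$ one-point connectifications of $X$ is a compact conditionally complete lattice.
   Context: Conventions: $T_{3\frac12}$ = completely regular and $T_1$; $T_4$ = normal and $T_1$; $T_5$ = hereditarily normal (every subspace normal) and $T_1$. A one-point connectification of $X$ is a connected space $Y$ containing $X$ as a dense subspace with $Y\setminus X$ a singleton; two are identified if there is a homeomorphism between them fixing every point of $X$. $\mathscr{Y}_i(X)$ is the set of (equivalence classes of) $T_i$ one-point connectifications of $X$, ordered by $Y_1\leq Y_2$ iff there is a continuous map $f:Y_2\to Y_1$ fixing every point of $X$. A conditionally complete lattice is a partially ordered set in which every non-empty bounded subset has a least upper bound and a greatest lower bound. A conditionally complete lattice $\mathscr{L}$ is compact if for every subset $\mathscr{H}\subseteq\mathscr{L}$ with no least upper bound there is a finite subset $\mathscr{H}'\subseteq\mathscr{H}$ which also has no least upper bound. *)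

theory Defs
  imports "HOL-Analysis.Analysis"
begin

datatype sep_axiom = T3half | T4 | T5

definition hereditarily_normal_space :: "'a topology \<Rightarrow> bool" where
  "hereditarily_normal_space X \<longleftrightarrow>
     (\<forall>S. S \<subseteq> topspace X \<longrightarrow> normal_space (subtopology X S))"

fun T_space :: "sep_axiom \<Rightarrow> 'a topology \<Rightarrow> bool" where
  "T_space T3half X \<longleftrightarrow> completely_regular_space X \<and> t1_space X"
| "T_space T4 X \<longleftrightarrow> normal_space X \<and> t1_space X"
| "T_space T5 X \<longleftrightarrow> hereditarily_normal_space X \<and> t1_space X"

text \<open>One-point connectifications of X, in canonical form: the underlying set is
  None added to Some ` topspace X, where X is identified with its
  copy via Some. Two one-point connectifications are identified iff there is a
  homeomorphism fixing X pointwise; such a homeomorphism between canonical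
  representatives must also fix the extra point, hence equivalence classes correspond
  exactly to topologies on this fixed carrier.\<close>

definition one_point_connectification :: "'a topology \<Rightarrow> 'a option topology \<Rightarrow> bool" where
  "one_point_connectification X Y \<longleftrightarrow>
     topspace Y = insert None (Some ` topspace X) \<and>
     homeomorphic_map X (subtopology Y (Some ` topspace X)) Some \<and>
     Y closure_of (Some ` topspace X) = topspace Y \<and>
     connected_space Y"

definition connectifications :: "sep_axiom \<Rightarrow> 'a topology \<Rightarrow> 'a option topology set" where
  "connectifications i X = {Y. one_point_connectification X Y \<and> T_space i Y}"

definition conn_le :: "'a topology \<Rightarrow> 'a option topology \<Rightarrow> 'a option topology \<Rightarrow> bool" where
  "conn_le X Y1 Y2 \<longleftrightarrow>
     (\<exists>f. continuous_map Y2 Y1 f \<and> (\<forall>x\<in>topspace X. f (Some x) = Some x))"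

definition partial_order_on_set :: "'b set \<Rightarrow> ('b \<Rightarrow> 'b \<Rightarrow> bool) \<Rightarrow> bool" where
  "partial_order_on_set L le \<longleftrightarrow>
     (\<forall>x\<in>L. le x x) \<and>
     (\<forall>x\<in>L. \<forall>y\<in>L. le x y \<and> le y x \<longrightarrow> x = y) \<and>
     (\<forall>x\<in>L. \<forall>y\<in>L. \<forall>z\<in>L. le x y \<and> le y z \<longrightarrow> le x z)"

definition is_ub :: "'b set \<Rightarrow> ('b \<Rightarrow> 'b \<Rightarrow> bool) \<Rightarrow> 'b set \<Rightarrow> 'b \<Rightarrow> bool" where
  "is_ub L le H u \<longleftrightarrow> u \<in> L \<and> (\<forall>h\<in>H. le h u)"

definition is_lb :: "'b set \<Rightarrow> ('b \<Rightarrow> 'b \<Rightarrow> bool) \<Rightarrow> 'b set \<Rightarrow> 'b \<Rightarrow> bool" where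
  "is_lb L le H u \<longleftrightarrow> u \<in> L \<and> (\<forall>h\<in>H. le u h)"

definition has_lub :: "'b set \<Rightarrow> ('b \<Rightarrow> 'b \<Rightarrow> bool) \<Rightarrow> 'b set \<Rightarrow> bool" where
  "has_lub L le H \<longleftrightarrow> (\<exists>u. is_ub L le H u \<and> (\<forall>v. is_ub L le H v \<longrightarrow> le u v))"

definition has_glb :: "'b set \<Rightarrow> ('b \<Rightarrow> 'b \<Rightarrow> bool) \<Rightarrow> 'b set \<Rightarrow> bool" where
  "has_glb L le H \<longleftrightarrow> (\<exists>u. is_lb L le H u \<and> (\<forall>v. is_lb L le H v \<longrightarrow> le v u))"

definition cond_complete_lattice :: "'b set \<Rightarrow> ('b \<Rightarrow> 'b \<Rightarrow> bool) \<Rightarrow> bool" where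
  "cond_complete_lattice L le \<longleftrightarrow>
     partial_order_on_set L le \<and>
     (\<forall>H. H \<subseteq> L \<and> H \<noteq> {} \<and> (\<exists>u. is_ub L le H u) \<and> (\<exists>l. is_lb L le H l)
          \<longrightarrow> has_lub L le H \<and> has_glb L le H)"

definition compact_cond_complete_lattice :: "'b set \<Rightarrow> ('b \<Rightarrow> 'b \<Rightarrow> bool) \<Rightarrow> bool" where
  "compact_cond_complete_lattice L le \<longleftrightarrow>
     cond_complete_lattice L le \<and>
     (\<forall>H. H \<subseteq> L \<and> \<not> has_lub L le H \<longrightarrow>
        (\<exists>H'. H' \<subseteq> H \<and> finite H' \<and> \<not> has_lub L le H'))"

end

theory Submission
  imports Defs
begin



lemma T_space_reg:
  assumes "T_space i Y"
  shows "regular_space Y \<and> t1_space Y \<and> Hausdorff_space Y"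
proof -
  have "regular_space Y \<and> t1_space Y"
  proof (cases i)
    case T3half then show ?thesis using assms completely_regular_imp_regular_space by auto
  next
    case T4 then show ?thesis using assms normal_t1_imp_regular_space by auto
  next
    case T5
    then have "hereditarily_normal_space Y" "t1_space Y" using assms by auto
    then have "normal_space (subtopology Y (topspace Y))" unfolding hereditarily_normal_space_def by blast
    then have "normal_space Y" "t1_space Y" using \<open>t1_space Y\<close> by auto
    then show ?thesis using normal_t1_imp_regular_space by auto
  qed
  then show ?thesis using regular_t1_imp_Hausdorff_space by blast
qed

lemma homeo_same_target:
  assumes "homeomorphic_map X Y f" "homeomorphic_map X Y' f"
  shows "Y = Y'"
proof -
  have *: "openin Y' U" if h1: "homeomorphic_map X Y f" and h2: "homeomorphic_map X Y' f"
     and U: "openin Y U" for Y Y' U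
  proof -
    have "U \<subseteq> f ` topspace X" using openin_subset[OF U] h1 homeomorphic_imp_surjective_map by blast
    then have eq: "U = f ` (topspace X \<inter> f -` U)" by auto
    have "openin X (topspace X \<inter> f -` U)"
      using homeomorphic_map_openness[OF h1, of "topspace X \<inter> f -` U"] U eq by auto
    then show ?thesis using homeomorphic_map_openness[OF h2, of "topspace X \<inter> f -` U"] eq by auto
  qed
  show ?thesis using *[OF assms] *[OF assms(2,1)] by (metis topology_eq)
qed

lemma conn_basic:
  assumes "Y \<in> connectifications i X"
  shows "topspace Y = insert None (Some ` topspace X)"
    "homeomorphic_map X (subtopology Y (Some ` topspace X)) Some"
    "Y closure_of (Some ` topspace X) = topspace Y" "connected_space Y" "T_space i Y"
  using assms unfolding connectifications_def one_point_connectification_def by auto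

lemma conn_subtop_eq:
  assumes "Y \<in> connectifications i X" "Y' \<in> connectifications i X"
  shows "subtopology Y (Some ` topspace X) = subtopology Y' (Some ` topspace X)"
  using homeo_same_target conn_basic(2)[OF assms(1)] conn_basic(2)[OF assms(2)] by blast

lemma conn_open_S:
  assumes "Y \<in> connectifications i X" "locally_compact_space X"
  shows "openin Y (Some ` topspace X)"
proof -
  have H: "Hausdorff_space Y" using T_space_reg conn_basic(5)[OF assms(1)] by blast
  have "locally_compact_space (subtopology Y (Some ` topspace X))"
    using homeomorphic_locally_compact_space homeomorphic_map_imp_homeomorphic_space
      conn_basic(2)[OF assms(1)] assms(2) by blast
  then have "openin (subtopology Y (Y closure_of (Some ` topspace X))) (Some ` topspace X)"
    using locally_compact_subspace_openin_closure_of[OF H] conn_basic(1)[OF assms(1)] by auto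
  then show ?thesis using conn_basic(3)[OF assms(1)] by simp
qed

lemma conn_le_iff:
  assumes Y1: "Y1 \<in> connectifications i X" and Y2: "Y2 \<in> connectifications i X"
    and lc: "locally_compact_space X"
  shows "conn_le X Y1 Y2 \<longleftrightarrow> (\<forall>U. openin Y1 U \<longrightarrow> openin Y2 U)"
proof
  let ?S = "Some ` topspace X"
  have ts: "topspace Y1 = insert None ?S" "topspace Y2 = insert None ?S"
    using conn_basic(1)[OF Y1] conn_basic(1)[OF Y2] by auto
  assume "conn_le X Y1 Y2"
  then obtain f where f: "continuous_map Y2 Y1 f" "\<And>x. x \<in> topspace X \<Longrightarrow> f (Some x) = Some x"
    unfolding conn_le_def by blast
  have N2: "None \<in> topspace Y2" using ts by simp
  have fN: "f None = None"
  proof (rule ccontr)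
    assume ne: "f None \<noteq> None"
    have "f None \<in> topspace Y1" using continuous_map_image_subset_topspace[OF f(1)] N2 by blast
    then obtain x where x: "x \<in> topspace X" "f None = Some x" using ne ts by auto
    have H: "Hausdorff_space Y2" using T_space_reg[OF conn_basic(5)[OF Y2]] by blast
    have "Some x \<in> topspace Y2" using ts x by simp
    then obtain N M where NM: "openin Y2 N" "openin Y2 M" "None \<in> N" "Some x \<in> M" "disjnt N M"
      using H N2 unfolding Hausdorff_space_def by blast
    have "openin (subtopology Y2 ?S) (M \<inter> ?S)" using openin_subtopology_Int[OF NM(2)] .
    then have "openin (subtopology Y1 ?S) (M \<inter> ?S)" using conn_subtop_eq[OF Y1 Y2] by simp
    then have MS: "openin Y1 (M \<inter> ?S)" using openin_open_subtopology[OF conn_open_S[OF Y1 lc]] by simp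
    have P: "openin Y2 {y \<in> topspace Y2. f y \<in> M \<inter> ?S}" using openin_continuous_map_preimage[OF f(1) MS] .
    have NP: "openin Y2 (N \<inter> {y \<in> topspace Y2. f y \<in> M \<inter> ?S})" using openin_Int[OF NM(1) P] .
    have inNP: "None \<in> N \<inter> {y \<in> topspace Y2. f y \<in> M \<inter> ?S}" using NM x N2 by simp
    have "None \<in> Y2 closure_of ?S" using conn_basic(3)[OF Y2] ts by simp
    then have CL: "\<forall>T. None \<in> T \<and> openin Y2 T \<longrightarrow> (\<exists>y. y \<in> ?S \<and> y \<in> T)" unfolding in_closure_of by blast
    have "\<exists>y. y \<in> ?S \<and> y \<in> N \<inter> {y \<in> topspace Y2. f y \<in> M \<inter> ?S}"
      using mp[OF spec[OF CL, of "N \<inter> {y \<in> topspace Y2. f y \<in> M \<inter> ?S}"] conjI[OF inNP NP]] .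
    then obtain y where y: "y \<in> ?S" "y \<in> N \<inter> {y \<in> topspace Y2. f y \<in> M \<inter> ?S}"
      by blast
    then obtain z where z: "z \<in> topspace X" "y = Some z" by blast
    have "y \<in> M" using y z f(2) by simp
    moreover have "y \<in> N" using y by simp
    ultimately show False using NM(5) unfolding disjnt_def by blast
  qed
  have fid: "\<And>y. y \<in> topspace Y2 \<Longrightarrow> f y = y" using fN f(2) ts by auto
  show "\<forall>U. openin Y1 U \<longrightarrow> openin Y2 U"
  proof (intro allI impI)
    fix U assume U: "openin Y1 U"
    have "{y \<in> topspace Y2. f y \<in> U} = U" using fid openin_subset[OF U] ts by auto
    then show "openin Y2 U" using openin_continuous_map_preimage[OF f(1) U] by simp
  qed
next
  assume *: "\<forall>U. openin Y1 U \<longrightarrow> openin Y2 U"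
  have ts: "topspace Y1 = topspace Y2" using conn_basic(1)[OF Y1] conn_basic(1)[OF Y2] by auto
  have "continuous_map Y2 Y1 (\<lambda>x. x)"
    unfolding continuous_map_def
  proof (intro conjI allI impI)
    show "(\<lambda>x. x) \<in> topspace Y2 \<rightarrow> topspace Y1" using ts by simp
    fix U assume "openin Y1 U"
    then have "{x \<in> topspace Y2. x \<in> U} = U" "openin Y2 U" using * openin_subset ts by auto
    then show "openin Y2 {x \<in> topspace Y2. x \<in> U}" by simp
  qed
  then show "conn_le X Y1 Y2" unfolding conn_le_def by blast
qed

lemma normal_ext_aux:
  assumes reg: "regular_space Z" and A: "openin Z A" and N: "normal_space (subtopology Z A)"
    and sp: "topspace Z \<subseteq> insert p A"
    and S: "closedin Z S" and T: "closedin Z T" and d: "disjnt S T" and pT: "p \<notin> T"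
  shows "\<exists>U V. openin Z U \<and> openin Z V \<and> S \<subseteq> U \<and> T \<subseteq> V \<and> disjnt U V"
proof -
  obtain W where W: "openin Z W" "topspace Z - A \<subseteq> W" "disjnt T (Z closure_of W)"
  proof (cases "p \<in> topspace Z \<and> p \<notin> A")
    case True
    then obtain W where "openin Z W" "p \<in> W" "disjnt T (Z closure_of W)"
      using reg T pT unfolding regular_space by (metis DiffI)
    then show ?thesis using that[of W] sp True by auto
  next
    case False then show ?thesis using that[of "{}"] sp by auto
  qed
  have TA: "T \<subseteq> A" using closedin_subset[OF T] sp pT by auto
  let ?S' = "(S \<union> Z closure_of W) \<inter> A"
  have c1: "closedin (subtopology Z A) ?S'"
    using closedin_subtopology S by (metis closedin_Un closedin_closure_of)
  have c2: "closedin (subtopology Z A) T"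
    using closedin_subtopology T TA by (metis inf.absorb_iff1)
  have d2: "disjnt ?S' T" using d W(3) unfolding disjnt_def by auto
  obtain U V where UV: "openin (subtopology Z A) U" "openin (subtopology Z A) V" "?S' \<subseteq> U" "T \<subseteq> V" "disjnt U V"
    using N c1 c2 d2 unfolding normal_space_def by meson
  have U: "openin Z U" "U \<subseteq> A" and V: "openin Z V" "V \<subseteq> A"
    using UV(1,2) openin_open_subtopology[OF A] by auto
  show ?thesis
  proof (intro exI conjI)
    show "openin Z (U \<union> W)" using U W by auto
    show "openin Z V" by (rule V)
    show "S \<subseteq> U \<union> W" using UV(3) W(2) closedin_subset[OF S] by auto
    show "T \<subseteq> V" by (rule UV(4))
    have "W \<subseteq> Z closure_of W" using closure_of_subset openin_subset[OF W(1)] by blast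
    then show "disjnt (U \<union> W) V" using UV(3,5) V(2) unfolding disjnt_def by auto
  qed
qed

lemma normal_ext:
  assumes reg: "regular_space Z" and A: "openin Z A" and N: "normal_space (subtopology Z A)"
    and sp: "topspace Z \<subseteq> insert p A"
  shows "normal_space Z"
  unfolding normal_space_def
proof clarify
  fix S T assume S: "closedin Z S" and T: "closedin Z T" and d: "disjnt S T"
  show "\<exists>U V. openin Z U \<and> openin Z V \<and> S \<subseteq> U \<and> T \<subseteq> V \<and> disjnt U V"
  proof (cases "p \<in> T")
    case False then show ?thesis using normal_ext_aux[OF assms S T d] by blast
  next
    case True
    then have "p \<notin> S" using d unfolding disjnt_def by auto
    then obtain U V where "openin Z U" "openin Z V" "T \<subseteq> U" "S \<subseteq> V" "disjnt U V"
      using normal_ext_aux[OF assms T S] d by (meson disjnt_sym)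
    then show ?thesis using disjnt_sym by blast
  qed
qed




definition joinT :: "'b topology set \<Rightarrow> 'b topology" where
  "joinT H = topology_generated_by {U. \<exists>h\<in>H. openin h U}"

lemma joinT_open: "h \<in> H \<Longrightarrow> openin h U \<Longrightarrow> openin (joinT H) U"
  unfolding joinT_def by (rule topology_generated_by_Basis) auto

lemma joinT_topspace:
  assumes "H \<noteq> {}" "\<And>h. h \<in> H \<Longrightarrow> topspace h = T"
  shows "topspace (joinT H) = T"
proof -
  have "\<Union>{U. \<exists>h\<in>H. openin h U} = T"
  proof
    show "\<Union>{U. \<exists>h\<in>H. openin h U} \<subseteq> T" using assms(2) openin_subset by blast
    obtain h where "h \<in> H" using assms(1) by auto
    then show "T \<subseteq> \<Union>{U. \<exists>h\<in>H. openin h U}" using assms(2)[of h] openin_topspace by blast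
  qed
  then show ?thesis unfolding joinT_def by simp
qed

lemma joinT_least:
  assumes "\<And>h U. h \<in> H \<Longrightarrow> openin h U \<Longrightarrow> openin v U" "openin (joinT H) U"
  shows "openin v U"
proof -
  have "generate_topology_on {U. \<exists>h\<in>H. openin h U} U"
    using assms(2) unfolding joinT_def by (rule openin_topology_generated_by)
  then show ?thesis
    using generate_topology_on_coarsest[of "openin v" "{U. \<exists>h\<in>H. openin h U}" U] assms(1) by auto
qed

lemma joinT_induct [consumes 1, case_names Empty Int UN Basis]:
  assumes "openin (joinT H) U"
    and "P {}" "\<And>a b. openin (joinT H) a \<Longrightarrow> openin (joinT H) b \<Longrightarrow> P a \<Longrightarrow> P b \<Longrightarrow> P (a \<inter> b)"
    "\<And>K. (\<And>k. k \<in> K \<Longrightarrow> openin (joinT H) k) \<Longrightarrow> (\<And>k. k \<in> K \<Longrightarrow> P k) \<Longrightarrow> P (\<Union>K)"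
    "\<And>h U. h \<in> H \<Longrightarrow> openin h U \<Longrightarrow> P U"
  shows "P U"
proof -
  have "generate_topology_on {U. \<exists>h\<in>H. openin h U} U"
    using assms(1) unfolding joinT_def by (rule openin_topology_generated_by)
  then show ?thesis
  proof (induction rule: generate_topology_on.induct)
    case Empty then show ?case using assms(2) .
  next
    case (Int a b) then show ?case using assms(3) unfolding joinT_def
      by (simp add: openin_topology_generated_by_iff)
  next
    case (UN K) then show ?case using assms(4)[of K] unfolding joinT_def
      by (simp add: openin_topology_generated_by_iff)
  next
    case (Basis s) then show ?case using assms(5) by auto
  qed
qed

lemma joinT_closedin:
  assumes "h \<in> H" "topspace (joinT H) = topspace h" "closedin h C"
  shows "closedin (joinT H) C"
  using assms joinT_open[OF assms(1)] unfolding closedin_def by auto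




lemma regular_space_nbhd:
  "regular_space Z \<longleftrightarrow> (\<forall>U x. openin Z U \<and> x \<in> U \<longrightarrow> (\<exists>V. openin Z V \<and> x \<in> V \<and> Z closure_of V \<subseteq> U))"
proof
  assume R: "regular_space Z"
  show "\<forall>U x. openin Z U \<and> x \<in> U \<longrightarrow> (\<exists>V. openin Z V \<and> x \<in> V \<and> Z closure_of V \<subseteq> U)"
  proof (intro allI impI, elim conjE)
    fix U x assume U: "openin Z U" "x \<in> U"
    have "closedin Z (topspace Z - U)" using closedin_diff[OF closedin_topspace U(1)] .
    moreover have "x \<in> topspace Z - (topspace Z - U)" using U openin_subset by fastforce
    ultimately obtain V where "openin Z V" "x \<in> V" "disjnt (topspace Z - U) (Z closure_of V)"
      using R unfolding regular_space by blast
    then show "\<exists>V. openin Z V \<and> x \<in> V \<and> Z closure_of V \<subseteq> U"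
      using closure_of_subset_topspace[of Z V] unfolding disjnt_def by blast
  qed
next
  assume R: "\<forall>U x. openin Z U \<and> x \<in> U \<longrightarrow> (\<exists>V. openin Z V \<and> x \<in> V \<and> Z closure_of V \<subseteq> U)"
  show "regular_space Z" unfolding regular_space
  proof (intro allI impI, elim conjE)
    fix C a assume C: "closedin Z C" "a \<in> topspace Z - C"
    then have "openin Z (topspace Z - C)" by (simp add: openin_diff)
    then obtain V where "openin Z V" "a \<in> V" "Z closure_of V \<subseteq> topspace Z - C" using R C by blast
    then show "\<exists>U. openin Z U \<and> a \<in> U \<and> disjnt C (Z closure_of U)" unfolding disjnt_def by blast
  qed
qed


lemma joinT_regular:
  assumes "H \<noteq> {}" "\<And>h. h \<in> H \<Longrightarrow> topspace h = T" "\<And>h. h \<in> H \<Longrightarrow> regular_space h"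
  shows "regular_space (joinT H)"
  unfolding regular_space_nbhd
proof clarify
  have ts: "topspace (joinT H) = T" by (rule joinT_topspace[OF assms(1,2)])
  fix U x assume U: "openin (joinT H) U" and x: "x \<in> U"
  have "\<forall>x\<in>U. \<exists>V. openin (joinT H) V \<and> x \<in> V \<and> joinT H closure_of V \<subseteq> U"
    using U
  proof (induction rule: joinT_induct)
    case Empty then show ?case by simp
  next
    case (Int a b)
    show ?case
    proof
      fix x assume "x \<in> a \<inter> b"
      then have "x \<in> a" "x \<in> b" by auto
      obtain V1 where V1: "openin (joinT H) V1" "x \<in> V1" "joinT H closure_of V1 \<subseteq> a"
        using Int.IH(1) \<open>x \<in> a\<close> by blast
      obtain V2 where V2: "openin (joinT H) V2" "x \<in> V2" "joinT H closure_of V2 \<subseteq> b"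
        using Int.IH(2) \<open>x \<in> b\<close> by blast
      have "joinT H closure_of (V1 \<inter> V2) \<subseteq> a \<inter> b"
        using closure_of_mono[of "V1 \<inter> V2" V1 "joinT H"] closure_of_mono[of "V1 \<inter> V2" V2 "joinT H"] V1(3) V2(3)
        by blast
      then show "\<exists>V. openin (joinT H) V \<and> x \<in> V \<and> joinT H closure_of V \<subseteq> a \<inter> b"
        using V1 V2 by (intro exI[of _ "V1 \<inter> V2"]) auto
    qed
  next
    case (UN K)
    show ?case
    proof
      fix x assume "x \<in> \<Union>K"
      then obtain k where k: "k \<in> K" "x \<in> k" by auto
      then obtain V where "openin (joinT H) V" "x \<in> V" "joinT H closure_of V \<subseteq> k"
        using UN.IH by blast
      then show "\<exists>V. openin (joinT H) V \<and> x \<in> V \<and> joinT H closure_of V \<subseteq> \<Union>K"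
        using k by blast
    qed
  next
    case (Basis h U)
    show ?case
    proof
      fix x assume "x \<in> U"
      then obtain V where V: "openin h V" "x \<in> V" "h closure_of V \<subseteq> U"
        using assms(3)[OF Basis(1)] Basis(2) unfolding regular_space_nbhd by blast
      have "closedin (joinT H) (h closure_of V)"
        using joinT_closedin[OF Basis(1)] ts assms(2)[OF Basis(1)] by simp
      moreover have "V \<subseteq> h closure_of V" using closure_of_subset openin_subset[OF V(1)] by blast
      ultimately have "joinT H closure_of V \<subseteq> h closure_of V"
        by (rule closure_of_minimal[rotated])
      then show "\<exists>V. openin (joinT H) V \<and> x \<in> V \<and> joinT H closure_of V \<subseteq> U"
        using V joinT_open[OF Basis(1) V(1)] by blast
    qed
  qed
  then show "\<exists>V. openin (joinT H) V \<and> x \<in> V \<and> joinT H closure_of V \<subseteq> U" using x by blast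
qed


lemma joinT_cont:
  assumes "h \<in> H" "topspace (joinT H) = topspace h" "continuous_map h Y f"
  shows "continuous_map (joinT H) Y f"
  unfolding continuous_map_def
proof (intro conjI allI impI)
  show "f \<in> topspace (joinT H) \<rightarrow> topspace Y" using assms(2,3) continuous_map_def by metis
  fix U assume "openin Y U"
  then have "openin h {x \<in> topspace h. f x \<in> U}" using assms(3) openin_continuous_map_preimage by blast
  then show "openin (joinT H) {x \<in> topspace (joinT H). f x \<in> U}" using joinT_open[OF assms(1)] assms(2) by simp
qed

lemma joinT_completely_regular:
  assumes "H \<noteq> {}" "\<And>h. h \<in> H \<Longrightarrow> topspace h = T" "\<And>h. h \<in> H \<Longrightarrow> completely_regular_space h"
  shows "completely_regular_space (joinT H)"
  unfolding completely_regular_space_alt'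
proof clarify
  have ts: "topspace (joinT H) = T" by (rule joinT_topspace[OF assms(1,2)])
  fix U x assume U: "openin (joinT H) U" and x: "x \<in> U"
  have "\<forall>x\<in>U. \<exists>f. continuous_map (joinT H) euclideanreal f \<and> f x = 0 \<and> f ` (topspace (joinT H) - U) \<subseteq> {1}"
    using U
  proof (induction rule: joinT_induct)
    case Empty then show ?case by simp
  next
    case (Int a b)
    show ?case
    proof
      fix x assume "x \<in> a \<inter> b"
      then have "x \<in> a" "x \<in> b" by auto
      obtain f where f: "continuous_map (joinT H) euclideanreal f" "f x = 0" "f ` (topspace (joinT H) - a) \<subseteq> {1}"
        using Int.IH(1) \<open>x \<in> a\<close> by blast
      obtain g where g: "continuous_map (joinT H) euclideanreal g" "g x = 0" "g ` (topspace (joinT H) - b) \<subseteq> {1}"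
        using Int.IH(2) \<open>x \<in> b\<close> by blast
      show "\<exists>f. continuous_map (joinT H) euclideanreal f \<and> f x = 0 \<and> f ` (topspace (joinT H) - a \<inter> b) \<subseteq> {1}"
      proof (intro exI conjI)
        show "continuous_map (joinT H) euclideanreal (\<lambda>y. min 1 (max (f y) (g y)))"
          using f(1) g(1) by (intro continuous_map_real_min continuous_map_real_max continuous_map_const[THEN iffD2]) auto
        show "min 1 (max (f x) (g x)) = (0::real)" using f(2) g(2) by simp
        show "(\<lambda>y. min 1 (max (f y) (g y))) ` (topspace (joinT H) - a \<inter> b) \<subseteq> {1}"
        proof
          fix z assume "z \<in> (\<lambda>y. min 1 (max (f y) (g y))) ` (topspace (joinT H) - a \<inter> b)"
          then obtain y where y: "y \<in> topspace (joinT H)" "y \<notin> a \<inter> b" and z: "z = min 1 (max (f y) (g y))" by auto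
          have "f y = 1 \<or> g y = 1" using y f(3) g(3) by auto
          then show "z \<in> {1}" using z by auto
        qed
      qed
    qed
  next
    case (UN K) 
    show ?case
    proof
      fix x assume "x \<in> \<Union>K"
      then obtain k where k: "k \<in> K" "x \<in> k" by auto
      then obtain f where f: "continuous_map (joinT H) euclideanreal f" "f x = 0" "f ` (topspace (joinT H) - k) \<subseteq> {1}"
        using UN.IH by blast
      have "topspace (joinT H) - \<Union>K \<subseteq> topspace (joinT H) - k" using k by auto
      then show "\<exists>f. continuous_map (joinT H) euclideanreal f \<and> f x = 0 \<and> f ` (topspace (joinT H) - \<Union>K) \<subseteq> {1}"
        using f by (meson image_mono order_trans)
    qed
  next
    case (Basis h U)
    show ?case
    proof
      fix x assume "x \<in> U"
      then obtain f where f: "continuous_map h euclideanreal f" "f x = 0" "f ` (topspace h - U) \<subseteq> {1}"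
        using assms(3)[OF Basis(1)] Basis(2) unfolding completely_regular_space_alt' by blast
      have t: "topspace (joinT H) = topspace h" using ts assms(2)[OF Basis(1)] by simp
      show "\<exists>f. continuous_map (joinT H) euclideanreal f \<and> f x = 0 \<and> f ` (topspace (joinT H) - U) \<subseteq> {1}"
        using joinT_cont[OF Basis(1) t f(1)] f(2,3) t by auto
    qed
  qed
  then show "\<exists>f. continuous_map (joinT H) euclideanreal f \<and> f x = 0 \<and> f ` (topspace (joinT H) - U) \<subseteq> {1}"
    using x by blast
qed



lemma heredN_homeo:
  assumes f: "homeomorphic_map X Y f" and HN: "hereditarily_normal_space X"
  shows "hereditarily_normal_space Y"
  unfolding hereditarily_normal_space_def
proof (intro allI impI)
  fix T assume T: "T \<subseteq> topspace Y"
  let ?T' = "topspace X \<inter> f -` T"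
  have surj: "f ` topspace X = topspace Y" using homeomorphic_imp_surjective_map[OF f] .
  have "f ` (topspace X \<inter> ?T') = topspace Y \<inter> T"
  proof
    show "f ` (topspace X \<inter> ?T') \<subseteq> topspace Y \<inter> T" using surj by auto
    show "topspace Y \<inter> T \<subseteq> f ` (topspace X \<inter> ?T')"
    proof
      fix y assume y: "y \<in> topspace Y \<inter> T"
      then obtain z where "z \<in> topspace X" "y = f z" using surj by (metis IntD1 imageE)
      then show "y \<in> f ` (topspace X \<inter> ?T')" using y by auto
    qed
  qed
  then have hm: "homeomorphic_map (subtopology X ?T') (subtopology Y T) f"
    by (rule homeomorphic_map_subtopologies[OF f])
  have sT: "?T' \<subseteq> topspace X" by (rule Int_lower1)
  have nT: "normal_space (subtopology X ?T')" using HN sT unfolding hereditarily_normal_space_def by simp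
  show "normal_space (subtopology Y T)"
    using homeomorphic_normal_space[OF homeomorphic_map_imp_homeomorphic_space[OF hm]] nT by simp
qed

lemma join_nbhd:
  assumes "openin (joinT H) V"
  shows "\<forall>x\<in>V. \<exists>F W. finite F \<and> F \<subseteq> H \<and> x \<in> W \<and> W \<subseteq> V \<and>
           (\<forall>v. (\<forall>h\<in>F. \<forall>U. openin h U \<longrightarrow> openin v U) \<longrightarrow> openin v W)"
  using assms
proof (induction rule: joinT_induct)
  case Empty then show ?case by simp
next
  case (Int a b)
  show ?case
  proof
    fix x assume "x \<in> a \<inter> b"
    then have "x \<in> a" "x \<in> b" by auto
    obtain F1 W1 where 1: "finite F1" "F1 \<subseteq> H" "x \<in> W1" "W1 \<subseteq> a"
       "\<forall>v. (\<forall>h\<in>F1. \<forall>U. openin h U \<longrightarrow> openin v U) \<longrightarrow> openin v W1"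
      using bspec[OF Int.IH(1) \<open>x \<in> a\<close>] by blast
    obtain F2 W2 where 2: "finite F2" "F2 \<subseteq> H" "x \<in> W2" "W2 \<subseteq> b"
       "\<forall>v. (\<forall>h\<in>F2. \<forall>U. openin h U \<longrightarrow> openin v U) \<longrightarrow> openin v W2"
      using bspec[OF Int.IH(2) \<open>x \<in> b\<close>] by blast
    show "\<exists>F W. finite F \<and> F \<subseteq> H \<and> x \<in> W \<and> W \<subseteq> a \<inter> b \<and>
           (\<forall>v. (\<forall>h\<in>F. \<forall>U. openin h U \<longrightarrow> openin v U) \<longrightarrow> openin v W)"
    proof (intro exI conjI allI impI)
      show "finite (F1 \<union> F2)" using 1 2 by simp
      show "F1 \<union> F2 \<subseteq> H" using 1 2 by simp
      show "x \<in> W1 \<inter> W2" using 1 2 by simp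
      show "W1 \<inter> W2 \<subseteq> a \<inter> b" using 1 2 by auto
      fix v assume v: "\<forall>h\<in>F1 \<union> F2. \<forall>U. openin h U \<longrightarrow> openin v U"
      have "openin v W1" using 1(5) v by blast
      moreover have "openin v W2" using 2(5) v by blast
      ultimately show "openin v (W1 \<inter> W2)" by (rule openin_Int)
    qed
  qed
next
  case (UN K)
  show ?case
  proof
    fix x assume "x \<in> \<Union>K"
    then obtain k where k: "k \<in> K" "x \<in> k" by auto
    obtain F W where "finite F" "F \<subseteq> H" "x \<in> W" "W \<subseteq> k"
       "\<forall>v. (\<forall>h\<in>F. \<forall>U. openin h U \<longrightarrow> openin v U) \<longrightarrow> openin v W"
      using bspec[OF UN.IH[OF k(1)] k(2)] by blast
    then show "\<exists>F W. finite F \<and> F \<subseteq> H \<and> x \<in> W \<and> W \<subseteq> \<Union>K \<and>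
           (\<forall>v. (\<forall>h\<in>F. \<forall>U. openin h U \<longrightarrow> openin v U) \<longrightarrow> openin v W)"
      using k by blast
  qed
next
  case (Basis h U)
  show ?case
  proof
    fix x assume x: "x \<in> U"
    show "\<exists>F W. finite F \<and> F \<subseteq> H \<and> x \<in> W \<and> W \<subseteq> U \<and>
           (\<forall>v. (\<forall>h\<in>F. \<forall>U. openin h U \<longrightarrow> openin v U) \<longrightarrow> openin v W)"
      by (rule exI[of _ "{h}"], rule exI[of _ U]) (use Basis x in auto)
  qed
qed

lemma join_in_L:
  assumes lc: "locally_compact_space X" and TX: "T_space i X"
    and HL: "H \<subseteq> connectifications i X" and Hne: "H \<noteq> {}"
    and fin: "\<And>F. finite F \<Longrightarrow> F \<subseteq> H \<Longrightarrow>
        \<exists>v\<in>connectifications i X. \<forall>h\<in>F. \<forall>U. openin h U \<longrightarrow> openin v U"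
  shows "joinT H \<in> connectifications i X"
proof -
  let ?L = "connectifications i X"
  let ?S = "Some ` topspace X"
  let ?J = "joinT H"
  obtain h0 where h0: "h0 \<in> H" using Hne by blast
  have h0L: "h0 \<in> ?L" using h0 HL by blast
  have hL: "\<And>h. h \<in> H \<Longrightarrow> h \<in> ?L" using HL by blast
  have tsH: "\<And>h. h \<in> H \<Longrightarrow> topspace h = insert None ?S" using conn_basic(1)[OF hL] by blast
  have ts: "topspace ?J = insert None ?S" by (rule joinT_topspace[OF Hne tsH])
  have sub: "subtopology ?J ?S = subtopology h0 ?S"
  proof (rule topology_eq[THEN iffD2], intro allI iffI)
    fix U assume "openin (subtopology ?J ?S) U"
    then obtain V where V: "openin ?J V" "U = V \<inter> ?S" by (auto simp: openin_subtopology)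
    have "openin (subtopology h0 ?S) (V \<inter> ?S)"
      using V(1)
    proof (induction rule: joinT_induct)
      case Empty then show ?case by simp
    next
      case (Int a b)
      have "a \<inter> b \<inter> ?S = (a \<inter> ?S) \<inter> (b \<inter> ?S)" by blast
      then show ?case using openin_Int[OF Int.IH] by simp
    next
      case (UN K)
      have "\<Union>K \<inter> ?S = \<Union>((\<lambda>k. k \<inter> ?S) ` K)" by blast
      moreover have "openin (subtopology h0 ?S) (\<Union>((\<lambda>k. k \<inter> ?S) ` K))"
      proof (rule openin_Union)
        fix T assume "T \<in> (\<lambda>k. k \<inter> ?S) ` K"
        then obtain k where "k \<in> K" "T = k \<inter> ?S" by blast
        then show "openin (subtopology h0 ?S) T" using UN.IH by simp
      qed
      ultimately show ?case by simp
    next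
      case (Basis h U)
      have "openin (subtopology h ?S) (U \<inter> ?S)" by (rule openin_subtopology_Int[OF Basis(2)])
      then show ?case using conn_subtop_eq[OF hL[OF Basis(1)] h0L] by simp
    qed
    then show "openin (subtopology h0 ?S) U" using V(2) by simp
  next
    fix U assume "openin (subtopology h0 ?S) U"
    then obtain V where V: "openin h0 V" "U = V \<inter> ?S" by (auto simp: openin_subtopology)
    have "openin ?J V" by (rule joinT_open[OF h0 V(1)])
    then show "openin (subtopology ?J ?S) U" using V(2) openin_subtopology_Int[OF \<open>openin ?J V\<close>] by simp
  qed
  have homeo: "homeomorphic_map X (subtopology ?J ?S) Some"
    using conn_basic(2)[OF h0L] sub by simp
  have Sopen: "openin ?J ?S" by (rule joinT_open[OF h0 conn_open_S[OF h0L lc]])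
  have nb: "\<exists>v\<in>?L. \<exists>W. x \<in> W \<and> W \<subseteq> V \<and> openin v W" if V: "openin ?J V" "x \<in> V" for V x
  proof -
    obtain F W where FW: "finite F" "F \<subseteq> H" "x \<in> W" "W \<subseteq> V"
       "\<forall>v. (\<forall>h\<in>F. \<forall>U. openin h U \<longrightarrow> openin v U) \<longrightarrow> openin v W"
      using bspec[OF join_nbhd[OF V(1)] V(2)] by blast
    obtain v where v: "v \<in> ?L" "\<forall>h\<in>F. \<forall>U. openin h U \<longrightarrow> openin v U" using fin[OF FW(1,2)] by blast
    show ?thesis using FW v by blast
  qed
  have dense: "?J closure_of ?S = topspace ?J"
  proof
    show "?J closure_of ?S \<subseteq> topspace ?J" by (rule closure_of_subset_topspace)
    show "topspace ?J \<subseteq> ?J closure_of ?S"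
    proof
      fix y assume y: "y \<in> topspace ?J"
      show "y \<in> ?J closure_of ?S"
      proof (cases "y = None")
        case False
        have "y = None \<or> y \<in> ?S" using y ts by simp
        then have "y \<in> ?S" using False by blast
        moreover have "?S \<subseteq> ?J closure_of ?S" using closure_of_subset ts by (metis subset_insertI)
        ultimately show ?thesis by blast
      next
        case True
        show ?thesis unfolding in_closure_of
        proof (intro conjI allI impI)
          show "y \<in> topspace ?J" by (rule y)
          fix T assume T: "y \<in> T \<and> openin ?J T"
          then obtain v W where vW: "v \<in> ?L" "None \<in> W" "W \<subseteq> T" "openin v W"
            using nb[of T None] True by blast
          have "None \<in> v closure_of ?S" using conn_basic(3)[OF vW(1)] conn_basic(1)[OF vW(1)] by simp
          then have CL: "\<forall>T. None \<in> T \<and> openin v T \<longrightarrow> (\<exists>y. y \<in> ?S \<and> y \<in> T)" unfolding in_closure_of by blast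
          have "\<exists>y. y \<in> ?S \<and> y \<in> W" using mp[OF spec[OF CL, of W] conjI[OF vW(2) vW(4)]] .
          then show "\<exists>y. y \<in> ?S \<and> y \<in> T" using vW(3) by blast
        qed
      qed
    qed
  qed
  have key: False if E: "openin ?J E1" "openin ?J E2" "topspace ?J \<subseteq> E1 \<union> E2" "E1 \<inter> E2 = {}"
       "E1 \<noteq> {}" "E2 \<noteq> {}" "None \<in> E1" for E1 E2
  proof -
    obtain v W where vW: "v \<in> ?L" "None \<in> W" "W \<subseteq> E1" "openin v W"
      using nb[OF E(1) E(7)] by blast
    have subv: "subtopology v ?S = subtopology ?J ?S" using conn_subtop_eq[OF vW(1) h0L] sub by simp
    have vS: "openin v ?S" by (rule conn_open_S[OF vW(1) lc])
    have o2: "openin v (E2 \<inter> ?S)"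
    proof -
      have "openin (subtopology ?J ?S) (E2 \<inter> ?S)" by (rule openin_subtopology_Int[OF E(2)])
      then have "openin (subtopology v ?S) (E2 \<inter> ?S)" using subv by simp
      then show ?thesis using openin_open_subtopology[OF vS] by simp
    qed
    have o1: "openin v (E1 \<inter> ?S)"
    proof -
      have "openin (subtopology ?J ?S) (E1 \<inter> ?S)" by (rule openin_subtopology_Int[OF E(1)])
      then have "openin (subtopology v ?S) (E1 \<inter> ?S)" using subv by simp
      then show ?thesis using openin_open_subtopology[OF vS] by simp
    qed
    have E1s: "E1 \<subseteq> insert None ?S" using openin_subset[OF E(1)] ts by simp
    have E2s: "E2 \<subseteq> insert None ?S" using openin_subset[OF E(2)] ts by simp
    have "None \<notin> E2" using E(4,7) by blast
    then have eq2: "E2 \<inter> ?S = E2" using E2s by blast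
    have eq1: "E1 = (E1 \<inter> ?S) \<union> W" using E1s vW(2,3) by blast
    have "openin v E1" using openin_Un[OF o1 vW(4)] eq1 by simp
    moreover have "openin v E2" using o2 eq2 by simp
    moreover have "topspace v \<subseteq> E1 \<union> E2" using conn_basic(1)[OF vW(1)] E(3) ts by simp
    ultimately show False using conn_basic(4)[OF vW(1)] E(4,5,6) unfolding connected_space_def by blast
  qed
  have conn: "connected_space ?J"
    unfolding connected_space_def
  proof (intro notI, elim exE conjE)
    fix E1 E2 assume E: "openin ?J E1" "openin ?J E2" "topspace ?J \<subseteq> E1 \<union> E2" "E1 \<inter> E2 = {}"
       "E1 \<noteq> {}" "E2 \<noteq> {}"
    have "None \<in> E1 \<union> E2" using E(3) ts by blast
    then show False
    proof
      assume "None \<in> E1" then show False using key[OF E] by blast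
    next
      assume N2: "None \<in> E2"
      have "topspace ?J \<subseteq> E2 \<union> E1" "E2 \<inter> E1 = {}" using E(3,4) by blast+
      then show False using key[OF E(2) E(1) _ _ E(6) E(5) N2] by blast
    qed
  qed
  have regH: "\<And>h. h \<in> H \<Longrightarrow> regular_space h" and t1h0: "t1_space h0"
    using T_space_reg conn_basic(5) hL h0L by blast+
  have t1: "t1_space ?J"
    by (rule t1_space_expansive[of ?J h0]) (use ts tsH[OF h0] joinT_open[OF h0] t1h0 in auto)
  have reg: "regular_space ?J" by (rule joinT_regular[OF Hne tsH regH])
  have T: "T_space i ?J"
  proof (cases i)
    case T3half
    have cr: "\<And>h. h \<in> H \<Longrightarrow> completely_regular_space h" using conn_basic(5)[OF hL] T3half by simp
    have "completely_regular_space ?J" by (rule joinT_completely_regular[OF Hne tsH cr])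
    then show ?thesis using t1 T3half by simp
  next
    case T4
    have "normal_space X" using TX T4 by simp
    then have "normal_space (subtopology ?J ?S)"
      using homeomorphic_normal_space[OF homeomorphic_map_imp_homeomorphic_space[OF homeo]] by simp
    then have "normal_space ?J" by (rule normal_ext[where p=None, OF reg Sopen]) (use ts in simp)
    then show ?thesis using t1 T4 by simp
  next
    case T5
    have "hereditarily_normal_space X" using TX T5 by simp
    then have HS: "hereditarily_normal_space (subtopology ?J ?S)" by (rule heredN_homeo[OF homeo])
    have "hereditarily_normal_space ?J"
      unfolding hereditarily_normal_space_def
    proof (intro allI impI)
      fix T assume T: "T \<subseteq> topspace ?J"
      have r: "regular_space (subtopology ?J T)" by (rule regular_space_subtopology[OF reg])
      have o: "openin (subtopology ?J T) (T \<inter> ?S)"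
        using openin_subtopology_Int2[OF Sopen, of T] .
      have "T \<inter> ?S \<subseteq> topspace (subtopology ?J ?S)" using T by auto
      then have "normal_space (subtopology (subtopology ?J ?S) (T \<inter> ?S))"
        using HS unfolding hereditarily_normal_space_def by blast
      moreover have "subtopology (subtopology ?J ?S) (T \<inter> ?S) = subtopology (subtopology ?J T) (T \<inter> ?S)"
        by (simp add: subtopology_subtopology Int_ac)
      ultimately have n: "normal_space (subtopology (subtopology ?J T) (T \<inter> ?S))" by simp
      have "topspace (subtopology ?J T) \<subseteq> insert None (T \<inter> ?S)" using ts by auto
      then show "normal_space (subtopology ?J T)" by (rule normal_ext[OF r o n])
    qed
    then show ?thesis using t1 T5 by simp
  qed
  show ?thesis
    unfolding connectifications_def one_point_connectification_def
    using ts homeo dense conn T by simp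
qed



theorem theorem3p2:
  fixes i :: sep_axiom and X :: "'a topology"
  assumes "locally_connected_space X"
    and "locally_compact_space X"
    and "T_space i X"
  shows "compact_cond_complete_lattice (connectifications i X) (conn_le X)"
proof -
  let ?L = "connectifications i X"
  let ?le = "conn_le X"
  note lc = assms(2) and TX = assms(3)
  have iff: "\<And>Y1 Y2. Y1 \<in> ?L \<Longrightarrow> Y2 \<in> ?L \<Longrightarrow> ?le Y1 Y2 \<longleftrightarrow> (\<forall>U. openin Y1 U \<longrightarrow> openin Y2 U)"
    using conn_le_iff lc by blast
  have lub: "has_lub ?L ?le H"
    if HL: "H \<subseteq> ?L" and Hne: "H \<noteq> {}"
      and fin: "\<And>F. finite F \<Longrightarrow> F \<subseteq> H \<Longrightarrow> \<exists>v\<in>?L. \<forall>h\<in>F. \<forall>U. openin h U \<longrightarrow> openin v U" for H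
  proof -
    have J: "joinT H \<in> ?L" by (rule join_in_L[OF lc TX HL Hne fin])
    have ub: "is_ub ?L ?le H (joinT H)"
      unfolding is_ub_def
    proof (intro conjI ballI)
      show "joinT H \<in> ?L" by (rule J)
      fix h assume h: "h \<in> H"
      have "\<forall>U. openin h U \<longrightarrow> openin (joinT H) U" using joinT_open[OF h] by blast
      then show "?le h (joinT H)" using iff[of h "joinT H"] HL h J by blast
    qed
    have least: "?le (joinT H) v" if v: "is_ub ?L ?le H v" for v
    proof -
      have vL: "v \<in> ?L" and hv: "\<forall>h\<in>H. ?le h v" using v unfolding is_ub_def by auto
      have "\<And>h U. h \<in> H \<Longrightarrow> openin h U \<Longrightarrow> openin v U"
      proof -
        fix h U assume "h \<in> H" "openin h U"
        then show "openin v U" using iff[of h v] HL vL hv by blast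
      qed
      then have "\<forall>U. openin (joinT H) U \<longrightarrow> openin v U" using joinT_least by blast
      then show ?thesis using iff[of "joinT H" v] J vL by blast
    qed
    show ?thesis unfolding has_lub_def using ub least by blast
  qed
  have po: "partial_order_on_set ?L ?le"
    unfolding partial_order_on_set_def
  proof (intro conjI ballI impI)
    fix x assume "x \<in> ?L" then show "?le x x" using iff by blast
  next
    fix x y assume xy: "x \<in> ?L" "y \<in> ?L" and le: "?le x y \<and> ?le y x"
    then have "\<forall>U. openin x U \<longleftrightarrow> openin y U" using iff[OF xy] iff[OF xy(2,1)] by blast
    then show "x = y" using topology_eq by blast
  next
    fix x y z assume xyz: "x \<in> ?L" "y \<in> ?L" "z \<in> ?L" and le: "?le x y \<and> ?le y z"
    then have "\<forall>U. openin x U \<longrightarrow> openin z U" using iff[OF xyz(1,2)] iff[OF xyz(2,3)] by blast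
    then show "?le x z" using iff[OF xyz(1,3)] by blast
  qed
  have ccl: "cond_complete_lattice ?L ?le"
    unfolding cond_complete_lattice_def
  proof (intro conjI allI impI po)
    fix H assume A: "H \<subseteq> ?L \<and> H \<noteq> {} \<and> (\<exists>u. is_ub ?L ?le H u) \<and> (\<exists>l. is_lb ?L ?le H l)"
    then have HL: "H \<subseteq> ?L" and Hne: "H \<noteq> {}" by auto
    obtain u where u: "is_ub ?L ?le H u" using A by blast
    obtain l where l: "is_lb ?L ?le H l" using A by blast
    show "has_lub ?L ?le H"
    proof (rule lub[OF HL Hne])
      fix F assume F: "finite F" "F \<subseteq> H"
      have uL: "u \<in> ?L" and hu: "\<forall>h\<in>H. ?le h u" using u unfolding is_ub_def by auto
      have "\<forall>h\<in>F. \<forall>U. openin h U \<longrightarrow> openin u U"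
      proof (intro ballI allI impI)
        fix h U assume "h \<in> F" "openin h U"
        then show "openin u U" using iff[of h u] F HL uL hu by blast
      qed
      then show "\<exists>v\<in>?L. \<forall>h\<in>F. \<forall>U. openin h U \<longrightarrow> openin v U" using uL by blast
    qed
    let ?Lo = "{v \<in> ?L. \<forall>h\<in>H. ?le v h}"
    obtain h0 where h0: "h0 \<in> H" using Hne by blast
    have h0L: "h0 \<in> ?L" using h0 HL by blast
    have lLo: "l \<in> ?Lo" using l unfolding is_lb_def by auto
    have "has_lub ?L ?le ?Lo"
    proof (rule lub)
      show "?Lo \<subseteq> ?L" by blast
      show "?Lo \<noteq> {}" using lLo by blast
      fix F assume F: "finite F" "F \<subseteq> ?Lo"
      have "\<forall>w\<in>F. \<forall>U. openin w U \<longrightarrow> openin h0 U"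
      proof (intro ballI allI impI)
        fix w U assume "w \<in> F" "openin w U"
        then show "openin h0 U" using iff[of w h0] F h0 h0L by blast
      qed
      then show "\<exists>v\<in>?L. \<forall>h\<in>F. \<forall>U. openin h U \<longrightarrow> openin v U" using h0L by blast
    qed
    then obtain g where g: "is_ub ?L ?le ?Lo g" and gl: "\<And>v. is_ub ?L ?le ?Lo v \<Longrightarrow> ?le g v"
      unfolding has_lub_def by blast
    have gL: "g \<in> ?L" using g unfolding is_ub_def by blast
    have lb: "is_lb ?L ?le H g"
      unfolding is_lb_def
    proof (intro conjI ballI gL)
      fix h assume h: "h \<in> H"
      have "is_ub ?L ?le ?Lo h" unfolding is_ub_def using h HL by blast
      then show "?le g h" by (rule gl)
    qed
    have "?le v g" if v: "is_lb ?L ?le H v" for v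
    proof -
      have "v \<in> ?Lo" using v unfolding is_lb_def by blast
      then show ?thesis using g unfolding is_ub_def by blast
    qed
    then show "has_glb ?L ?le H" unfolding has_glb_def using lb by blast
  qed
  have cpt: "\<exists>H'. H' \<subseteq> H \<and> finite H' \<and> \<not> has_lub ?L ?le H'"
    if A: "H \<subseteq> ?L \<and> \<not> has_lub ?L ?le H" for H
  proof (cases "H = {}")
    case True then show ?thesis using A by blast
  next
    case False
    show ?thesis
    proof (rule ccontr)
      assume "\<not> ?thesis"
      then have all: "\<And>H'. H' \<subseteq> H \<Longrightarrow> finite H' \<Longrightarrow> has_lub ?L ?le H'" by blast
      have HL: "H \<subseteq> ?L" using A by blast
      have "has_lub ?L ?le H"
      proof (rule lub[OF HL False])
        fix F assume F: "finite F" "F \<subseteq> H"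
        obtain u where u: "is_ub ?L ?le F u" using all[OF F(2,1)] unfolding has_lub_def by blast
        have uL: "u \<in> ?L" and hu: "\<forall>h\<in>F. ?le h u" using u unfolding is_ub_def by auto
        have "\<forall>h\<in>F. \<forall>U. openin h U \<longrightarrow> openin u U"
        proof (intro ballI allI impI)
          fix h U assume "h \<in> F" "openin h U"
          then show "openin u U" using iff[of h u] F HL uL hu by blast
        qed
        then show "\<exists>v\<in>?L. \<forall>h\<in>F. \<forall>U. openin h U \<longrightarrow> openin v U" using uL by blast
      qed
      then show False using A by blast
    qed
  qed
  show ?thesis unfolding compact_cond_complete_lattice_def using ccl cpt by blast
qed


end
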